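(* Consider the queueing system in the context under MaxWeight with a diagonal matrix $\Delta$ with positive diagonal entries, in overload ($\rho\notin\mathcal{P}$). Let $H=\limsup_{t\to\infty}\langle \frac{X(t)}{t},\Delta\frac{X(t)}{t}\rangle$ and let $\eta$ be the limit of $X(t_c)/t_c$ along an increasing unbounded sequence $\{t_c\}$ with $\langle\eta,\Delta\eta\rangle=H$. Then for any increasing unbounded sequence $\{t_m\}$ with $\lim_{m\to\infty}X(t_m)/t_m=\mu$, $$\langle\mu,\Delta\eta\rangle\ge\langle\eta,\Delta\eta\rangle\implies \mu=\eta.$$
   Context: Model: $Q$ queues, finite set $\mathcal{S}=\{S_1,\dots,S_N\}\subset\mathbb{R}^Q_{\ge0}$, discrete time. Arrivals $A(t)$ with $0\le A_q(t)\le\bar A_q<\infty$ and $\rho_q=\lim_{t\to\infty}\frac1t\sum_{s=0}^{t-1}A_q(s)\in(0,\infty)$. Departures $D_q(t)=\min\{S_q(t),X_q(t)\}$, $X(t+1)=X(t)+A(t)-D(t)$, $X(0)=0$, with $S(t)\in\arg\max_{S\in\mathcal{S}}\langle S,\Delta X(t)\rangle$. Stability region $\mathcal{P}=\{r\in\mathbb{R}^Q_{\ge0}: r\le\sum_n\alpha_nS_n\text{ for some }\alpha_n\ge0,\sum_n\alpha_n=1\}$. *)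

theory Defs
  imports "HOL-Analysis.Analysis"
begin

definition stab_region :: "(real^'q::finite) set \<Rightarrow> (real^'q) set" where
  "stab_region SS = {r. (\<forall>q. 0 \<le> r$q) \<and>
     (\<exists>\<alpha>. (\<forall>s\<in>SS. 0 \<le> \<alpha> s) \<and> sum \<alpha> SS = 1 \<and>
          (\<forall>q. r$q \<le> (\<Sum>s\<in>SS. \<alpha> s * s$q)))}"

end

theory Submission
  imports Defs
begin

lemma diag_inner:
  fixes D :: "real^'q^'q::finite"
  assumes diag: "\<forall>i j. i \<noteq> j \<longrightarrow> D$i$j = 0"
  shows "x \<bullet> (D *v y) = (\<Sum>i\<in>UNIV. x$i * D$i$i * y$i)"
proof -
  have "\<And>i. (D *v y)$i = D$i$i * y$i"
  proof -
    fix i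
    have "(D *v y)$i = (\<Sum>j\<in>UNIV. D$i$j * y$j)" by (simp add: matrix_vector_mult_def)
    also have "\<dots> = D$i$i * y$i"
      by (subst sum.remove[of _ i]) (auto intro!: sum.neutral simp: diag)
    finally show "(D *v y)$i = D$i$i * y$i" .
  qed
  then show ?thesis by (simp add: inner_vec_def mult.assoc)
qed


theorem lemma5:
  fixes SS :: "(real^'q::finite) set"
    and A X S :: "nat \<Rightarrow> real^'q"
    and Abar \<rho> \<eta> \<mu> :: "real^'q"
    and \<Delta> :: "real^'q^'q"
    and tc tm :: "nat \<Rightarrow> nat"
  assumes fin: "finite SS" and ne: "SS \<noteq> {}"
    and nonneg: "\<forall>s\<in>SS. \<forall>q. 0 \<le> s$q"
    and arr_bd: "\<forall>t q. 0 \<le> A t $ q \<and> A t $ q \<le> Abar $ q"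
    and rate: "(\<lambda>t. (\<Sum>s<t. A s) /\<^sub>R real t) \<longlonglongrightarrow> \<rho>"
    and rate_pos: "\<forall>q. 0 < \<rho> $ q"
    and diag: "\<forall>i j. i \<noteq> j \<longrightarrow> \<Delta>$i$j = 0"
    and diag_pos: "\<forall>i. 0 < \<Delta>$i$i"
    and X0: "X 0 = 0"
    and maxweight: "\<forall>t. S t \<in> SS \<and> (\<forall>s\<in>SS. s \<bullet> (\<Delta> *v X t) \<le> S t \<bullet> (\<Delta> *v X t))"
    and dyn: "\<forall>t. X (Suc t) = X t + A t - (\<chi> q. min (S t $ q) (X t $ q))"
    and overload: "\<rho> \<notin> stab_region SS"
    and tc_mono: "mono tc" and tc_unb: "filterlim tc at_top sequentially"
    and tc_lim: "(\<lambda>c. X (tc c) /\<^sub>R real (tc c)) \<longlonglongrightarrow> \<eta>"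
    and H: "limsup (\<lambda>t. ereal ((X t /\<^sub>R real t) \<bullet> (\<Delta> *v (X t /\<^sub>R real t))))
              = ereal (\<eta> \<bullet> (\<Delta> *v \<eta>))"
    and tm_mono: "mono tm" and tm_unb: "filterlim tm at_top sequentially"
    and tm_lim: "(\<lambda>m. X (tm m) /\<^sub>R real (tm m)) \<longlonglongrightarrow> \<mu>"
  shows "\<mu> \<bullet> (\<Delta> *v \<eta>) \<ge> \<eta> \<bullet> (\<Delta> *v \<eta>) \<longrightarrow> \<mu> = \<eta>"
proof
  assume ge: "\<mu> \<bullet> (\<Delta> *v \<eta>) \<ge> \<eta> \<bullet> (\<Delta> *v \<eta>)"
  define f where "f t = (X t /\<^sub>R real t) \<bullet> (\<Delta> *v (X t /\<^sub>R real t))" for t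
  define h where "h = \<eta> \<bullet> (\<Delta> *v \<eta>)"
  have lim: "(\<lambda>m. f (tm m)) \<longlonglongrightarrow> \<mu> \<bullet> (\<Delta> *v \<mu>)"
    unfolding f_def
    by (intro tendsto_inner tendsto_scaleR tm_lim tendsto_const bounded_linear.tendsto[OF matrix_vector_mul_bounded_linear])
  have le: "\<mu> \<bullet> (\<Delta> *v \<mu>) \<le> h + e" if e: "e > 0" for e
  proof -
    have "ereal (h + e) > limsup (\<lambda>t. ereal (f t))"
      using H e unfolding f_def h_def by simp
    then have "eventually (\<lambda>t. ereal (f t) < ereal (h + e)) sequentially"
      by (rule Limsup_lessD)
    then have "eventually (\<lambda>t. f t < h + e) sequentially" by simp
    then have "eventually (\<lambda>m. f (tm m) < h + e) sequentially"
      using tm_unb by (rule eventually_compose_filterlim[where f=tm])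
    then have "eventually (\<lambda>m. f (tm m) \<le> h + e) sequentially"
      by (auto elim: eventually_mono)
    then show ?thesis
      using tendsto_upperbound[OF lim] by simp
  qed
  have mm: "\<mu> \<bullet> (\<Delta> *v \<mu>) \<le> h"
    by (rule field_le_epsilon) (rule le)
  define d where "d = \<mu> - \<eta>"
  have eq: "d \<bullet> (\<Delta> *v d) = \<mu> \<bullet> (\<Delta> *v \<mu>) - 2 * (\<mu> \<bullet> (\<Delta> *v \<eta>)) + \<eta> \<bullet> (\<Delta> *v \<eta>)"
  proof -
    have "\<And>i. d$i * \<Delta>$i$i * d$i = \<mu>$i * \<Delta>$i$i * \<mu>$i - 2 * (\<mu>$i * \<Delta>$i$i * \<eta>$i) + \<eta>$i * \<Delta>$i$i * \<eta>$i"
      unfolding d_def by (simp add: algebra_simps)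
    then show ?thesis
      unfolding diag_inner[OF diag] by (simp add: sum.distrib sum_subtractf sum_distrib_left)
  qed
  have dd: "d \<bullet> (\<Delta> *v d) \<le> 0"
    using eq ge mm unfolding h_def by linarith
  have terms: "0 \<le> d$i * \<Delta>$i$i * d$i" for i
  proof -
    have "d$i * \<Delta>$i$i * d$i = \<Delta>$i$i * (d$i * d$i)" by simp
    also have "\<dots> \<ge> 0" using diag_pos[rule_format, of i] by (simp add: mult_nonneg_nonneg)
    finally show ?thesis .
  qed
  have "(\<Sum>i\<in>UNIV. d$i * \<Delta>$i$i * d$i) \<ge> 0" using terms by (intro sum_nonneg) auto
  then have "(\<Sum>i\<in>UNIV. d$i * \<Delta>$i$i * d$i) = 0"
    using dd unfolding diag_inner[OF diag] by linarith
  then have z: "d$i * \<Delta>$i$i * d$i = 0" for i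
    using terms by (simp add: sum_nonneg_eq_0_iff)
  have "d$i = 0" for i
  proof -
    have "\<Delta>$i$i \<noteq> 0" using diag_pos[rule_format, of i] by simp
    then show ?thesis using z[of i] by simp
  qed
  then have "\<forall>i. d$i = 0" by simp
  then have "d = 0" by (simp add: vec_eq_iff)
  then show "\<mu> = \<eta>" unfolding d_def by simp
qed

end
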